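(* Let $N\ge1$, real $\delta,\varepsilon>0$, and arbitrary real $r_i,c_i,c'_i$ ($1\le i\le N$). For integers $l,m,n$ put $\eta_i(l,m,n)=\max(0,r_i-\delta)l-\max(0,-r_i-\varepsilon)m+r_in+c_i$, $\eta'_i(l,m,n)=\max(0,-r_i-\delta)l-\max(0,r_i-\varepsilon)m-r_in+c'_i$, $\phi_i(l,m,n)=\max(\eta_i(l,m,n),\eta'_i(l,m,n))$ and $\tau(l,m,n)=\max[\phi_i(l,m,n+j-1)]_{1\le i,j\le N}$. Then $\tau$ satisfies the ultradiscrete two-dimensional Toda lattice equation \[ \tau(l,m-1,n)+\tau(l+1,m,n)=\max\bigl(\tau(l,m,n)+\tau(l+1,m-1,n),\ \tau(l,m-1,n+1)+\tau(l+1,m,n-1)-\delta-\varepsilon\bigr) \] for all integers $l,m,n$.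
   Context: Ultradiscrete permanent (UP): for a real $N\times N$ matrix $A=(a_{ij})$, $\max[a_{ij}]_{1\le i,j\le N}\equiv\max_{\pi}\sum_{i=1}^N a_{i\pi(i)}$ over all permutations $\pi$ of $\{1,\dots,N\}$. *)

theory Defs
  imports "HOL-Combinatorics.Permutations" Complex_Main
begin

definition updisc :: "nat \<Rightarrow> (nat \<Rightarrow> nat \<Rightarrow> real) \<Rightarrow> real" where
  "updisc N a = Max ((\<lambda>p. \<Sum>i\<in>{1..N}. a i (p i)) ` {p. p permutes {1..N}})"

definition eta :: "real \<Rightarrow> real \<Rightarrow> real \<Rightarrow> real \<Rightarrow> int \<Rightarrow> int \<Rightarrow> int \<Rightarrow> real" where
  "eta \<delta> \<epsilon> r c l m n =
     max 0 (r - \<delta>) * of_int l - max 0 (- r - \<epsilon>) * of_int m + r * of_int n + c"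

definition eta' :: "real \<Rightarrow> real \<Rightarrow> real \<Rightarrow> real \<Rightarrow> int \<Rightarrow> int \<Rightarrow> int \<Rightarrow> real" where
  "eta' \<delta> \<epsilon> r c' l m n =
     max 0 (- r - \<delta>) * of_int l - max 0 (r - \<epsilon>) * of_int m - r * of_int n + c'"

definition phi :: "real \<Rightarrow> real \<Rightarrow> real \<Rightarrow> real \<Rightarrow> real \<Rightarrow> int \<Rightarrow> int \<Rightarrow> int \<Rightarrow> real" where
  "phi \<delta> \<epsilon> r c c' l m n = max (eta \<delta> \<epsilon> r c l m n) (eta' \<delta> \<epsilon> r c' l m n)"

definition tau :: "nat \<Rightarrow> real \<Rightarrow> real \<Rightarrow> (nat \<Rightarrow> real) \<Rightarrow> (nat \<Rightarrow> real) \<Rightarrow> (nat \<Rightarrow> real)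
                    \<Rightarrow> int \<Rightarrow> int \<Rightarrow> int \<Rightarrow> real" where
  "tau N \<delta> \<epsilon> r c c' l m n =
     updisc N (\<lambda>i j. phi \<delta> \<epsilon> (r i) (c i) (c' i) l m (n + int j - 1))"

end

theory Submission
  imports Defs
begin


lemma abel_aux:
  fixes w p :: "nat \<Rightarrow> real"
  assumes w0: "\<And>k. 0 \<le> w k" and wmono: "\<And>k. Suc k < n \<Longrightarrow> w (Suc k) \<le> w k"
    and p0: "\<And>k. k \<le> n \<Longrightarrow> 0 \<le> p k"
  shows "m \<le> n \<Longrightarrow> (\<Sum>k<m. w k * (p (Suc k) - p k)) \<ge> (if m = 0 then w 0 else w (m - 1)) * p m - w 0 * p 0"
proof (induction m)
  case 0 then show ?case by simp
next
  case (Suc m)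
  then have IH: "(\<Sum>k<m. w k * (p (Suc k) - p k)) \<ge> (if m = 0 then w 0 else w (m - 1)) * p m - w 0 * p 0" by simp
  have "(if m = 0 then w 0 else w (m - 1)) \<ge> w m"
    using wmono[of "m-1"] Suc.prems by (cases m) auto
  moreover have "p m \<ge> 0" using p0 Suc.prems by simp
  ultimately have "(if m = 0 then w 0 else w (m - 1)) * p m \<ge> w m * p m" by (simp add: mult_right_mono)
  then show ?case using IH by (simp add: algebra_simps)
qed

lemma abel:
  fixes w p :: "nat \<Rightarrow> real"
  assumes w0: "\<And>k. 0 \<le> w k" and wmono: "\<And>k. Suc k < n \<Longrightarrow> w (Suc k) \<le> w k"
    and p0: "\<And>k. k \<le> n \<Longrightarrow> 0 \<le> p k"
  shows "(\<Sum>k<n. w k * (p (Suc k) - p k)) \<ge> - w 0 * p 0"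
proof -
  have "(\<Sum>k<n. w k * (p (Suc k) - p k)) \<ge> (if n = 0 then w 0 else w (n - 1)) * p n - w 0 * p 0"
    using abel_aux[of w n p n] w0 wmono p0 by blast
  moreover have "(if n = 0 then w 0 else w (n - 1)) * p n \<ge> 0" using w0 p0[of n] by simp
  ultimately show ?thesis by simp
qed

definition valid :: "nat \<Rightarrow> (nat \<Rightarrow> int) \<Rightarrow> bool" where
  "valid n h \<longleftrightarrow> (\<forall>k<n. h (Suc k) = h k + 1 \<or> h (Suc k) = h k - 1)"

definition pen :: "(nat \<Rightarrow> real) \<Rightarrow> (nat \<Rightarrow> int) \<Rightarrow> nat \<Rightarrow> real" where
  "pen \<alpha> h k = \<alpha> k * of_int ((h (Suc k) - h k) * h k)"

definition SX :: "nat \<Rightarrow> (nat \<Rightarrow> real) \<Rightarrow> (nat \<Rightarrow> real) \<Rightarrow> (nat \<Rightarrow> int) \<Rightarrow> real" where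
  "SX n \<alpha> cc h = (\<Sum>k<n. (if h k < h (Suc k) then cc k else 0) - pen \<alpha> h k)"

definition SY :: "nat \<Rightarrow> (nat \<Rightarrow> real) \<Rightarrow> (nat \<Rightarrow> real) \<Rightarrow> (nat \<Rightarrow> real) \<Rightarrow> (nat \<Rightarrow> int) \<Rightarrow> real" where
  "SY n \<alpha> AA BB h = (\<Sum>k<n. (if h k < h (Suc k) then AA k else BB k) - pen \<alpha> h k)"

lemma step_abs:
  fixes x y :: int and AA BB al :: real
  assumes "y = x + 1 \<or> y = x - 1"
  shows "((if \<bar>x\<bar> < \<bar>y\<bar> then AA + BB else 0) - al * of_int ((\<bar>y\<bar> - \<bar>x\<bar>) * \<bar>x\<bar>))
       - ((if x < y then AA else BB) - al * of_int ((y - x) * x))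
     = BB * (of_int (max 0 y) - of_int (max 0 x)) + AA * (of_int (max 0 (-y)) - of_int (max 0 (-x)))"
proof -
  consider "x \<ge> 1" | "x = 0" | "x \<le> -1" by linarith
  then show ?thesis
  proof cases
    case 1 then show ?thesis using assms by (auto simp: algebra_simps)
  next
    case 2 then show ?thesis using assms by (auto simp: algebra_simps)
  next
    case 3 then show ?thesis using assms by (auto simp: algebra_simps)
  qed
qed

lemma walk_i:
  fixes AA BB :: "nat \<Rightarrow> real"
  assumes v: "valid n h" and h0: "h 0 = 0"
    and A0: "\<And>k. 0 \<le> AA k" and Am: "\<And>k. Suc k < n \<Longrightarrow> AA (Suc k) \<le> AA k"
    and B0: "\<And>k. 0 \<le> BB k" and Bm: "\<And>k. Suc k < n \<Longrightarrow> BB (Suc k) \<le> BB k"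
  shows "SY n \<alpha> AA BB h \<le> SX n \<alpha> (\<lambda>k. AA k + BB k) (\<lambda>k. \<bar>h k\<bar>)"
proof -
  let ?p = "\<lambda>k. real_of_int (max 0 (h k))" and ?q = "\<lambda>k. real_of_int (max 0 (- h k))"
  have "SX n \<alpha> (\<lambda>k. AA k + BB k) (\<lambda>k. \<bar>h k\<bar>) - SY n \<alpha> AA BB h
      = (\<Sum>k<n. BB k * (?p (Suc k) - ?p k) + AA k * (?q (Suc k) - ?q k))"
    unfolding SX_def SY_def pen_def sum_subtractf[symmetric]
  proof (rule sum.cong[OF refl])
    fix k assume "k \<in> {..<n}"
    then have "h (Suc k) = h k + 1 \<or> h (Suc k) = h k - 1" using v unfolding valid_def by auto
    from step_abs[OF this, of "AA k" "BB k" "\<alpha> k"]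
    show "(if \<bar>h k\<bar> < \<bar>h (Suc k)\<bar> then AA k + BB k else 0) - \<alpha> k * real_of_int ((\<bar>h (Suc k)\<bar> - \<bar>h k\<bar>) * \<bar>h k\<bar>) -
         ((if h k < h (Suc k) then AA k else BB k) - \<alpha> k * real_of_int ((h (Suc k) - h k) * h k)) =
         BB k * (?p (Suc k) - ?p k) + AA k * (?q (Suc k) - ?q k)" by simp
  qed
  also have "\<dots> = (\<Sum>k<n. BB k * (?p (Suc k) - ?p k)) + (\<Sum>k<n. AA k * (?q (Suc k) - ?q k))"
    by (simp add: sum.distrib)
  also have "\<dots> \<ge> 0"
  proof -
    have "(\<Sum>k<n. BB k * (?p (Suc k) - ?p k)) \<ge> - BB 0 * ?p 0"
      by (rule abel) (use B0 Bm in auto)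
    moreover have "(\<Sum>k<n. AA k * (?q (Suc k) - ?q k)) \<ge> - AA 0 * ?q 0"
      by (rule abel) (use A0 Am in auto)
    ultimately show ?thesis using h0 by simp
  qed
  finally show ?thesis by simp
qed

lemma step_refl1:
  fixes x y :: int and cc al :: real
  assumes "y = x + 1 \<or> y = x - 1"
  shows "((if 1 - \<bar>x - 1\<bar> < 1 - \<bar>y - 1\<bar> then cc else 0) - al * of_int (((1 - \<bar>y - 1\<bar>) - (1 - \<bar>x - 1\<bar>)) * (1 - \<bar>x - 1\<bar>)))
       - ((if x < y then cc else 0) - al * of_int ((y - x) * x))
     = (2 * al - cc) * (of_int (max 0 (y - 1)) - of_int (max 0 (x - 1)))"
proof -
  consider "x \<ge> 2" | "x = 1" | "x \<le> 0" by linarith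
  then show ?thesis
  proof cases
    case 1 then show ?thesis using assms by (auto simp: algebra_simps)
  next
    case 2 then show ?thesis using assms by (auto simp: algebra_simps)
  next
    case 3 then show ?thesis using assms by (auto simp: algebra_simps)
  qed
qed

lemma walk_ii:
  fixes \<alpha> :: "nat \<Rightarrow> real" and \<delta> \<epsilon> :: real
  assumes v: "valid n h" and h0: "h 0 = 0"
    and a0: "\<And>k. 0 \<le> \<alpha> k" and am: "\<And>k. Suc k < n \<Longrightarrow> \<alpha> (Suc k) \<le> \<alpha> k"
    and d: "\<delta> > 0" and e: "\<epsilon> > 0"
    and cc: "\<And>k. cc k = max 0 (\<alpha> k - \<delta>) + max 0 (\<alpha> k - \<epsilon>)"
  shows "SX n \<alpha> cc (\<lambda>k. h k + 2) - \<delta> - \<epsilon> \<le> SX n \<alpha> cc (\<lambda>k. 1 - \<bar>h k + 1\<bar>)"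
proof -
  let ?u = "\<lambda>k. real_of_int (max 0 (h k + 1))"
  let ?kap = "\<lambda>k. 2 * \<alpha> k - cc k"
  have kap: "\<And>k. ?kap k = min (\<alpha> k) \<delta> + min (\<alpha> k) \<epsilon>" using cc by (auto simp: max_def min_def)
  have "SX n \<alpha> cc (\<lambda>k. 1 - \<bar>h k + 1\<bar>) - SX n \<alpha> cc (\<lambda>k. h k + 2)
      = (\<Sum>k<n. ?kap k * (?u (Suc k) - ?u k))"
    unfolding SX_def pen_def sum_subtractf[symmetric]
  proof (rule sum.cong[OF refl])
    fix k assume "k \<in> {..<n}"
    then have "h (Suc k) + 2 = (h k + 2) + 1 \<or> h (Suc k) + 2 = (h k + 2) - 1" using v unfolding valid_def by auto
    from step_refl1[OF this, of "cc k" "\<alpha> k"]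
    show "(if 1 - \<bar>h k + 1\<bar> < 1 - \<bar>h (Suc k) + 1\<bar> then cc k else 0) -
         \<alpha> k * real_of_int ((1 - \<bar>h (Suc k) + 1\<bar> - (1 - \<bar>h k + 1\<bar>)) * (1 - \<bar>h k + 1\<bar>)) -
         ((if h k + 2 < h (Suc k) + 2 then cc k else 0) - \<alpha> k * real_of_int ((h (Suc k) + 2 - (h k + 2)) * (h k + 2))) =
         (2 * \<alpha> k - cc k) * (?u (Suc k) - ?u k)"
      by (simp add: add.commute)
  qed
  also have "\<dots> \<ge> - ?kap 0 * ?u 0"
  proof (rule abel)
    show "\<And>k. 0 \<le> ?kap k" using kap a0 d e by (simp add: min_def)
    show "\<And>k. Suc k < n \<Longrightarrow> ?kap (Suc k) \<le> ?kap k" using kap am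
      by (smt (verit, best) min_def)
    show "\<And>k. k \<le> n \<Longrightarrow> 0 \<le> ?u k" by simp
  qed
  finally have "SX n \<alpha> cc (\<lambda>k. 1 - \<bar>h k + 1\<bar>) - SX n \<alpha> cc (\<lambda>k. h k + 2) \<ge> - ?kap 0" using h0 by simp
  moreover have "?kap 0 \<le> \<delta> + \<epsilon>" using kap by (simp add: min_def)
  ultimately show ?thesis by linarith
qed

lemma valid_abs: "valid n h \<Longrightarrow> valid n (\<lambda>k. \<bar>h k\<bar>)"
  unfolding valid_def by (auto simp: abs_if)

lemma valid_refl1: "valid n h \<Longrightarrow> valid n (\<lambda>k. 1 - \<bar>h k + 1\<bar>)"
  unfolding valid_def by (auto simp: abs_if)

lemma walk_iii:
  fixes \<alpha> :: "nat \<Rightarrow> real" and \<delta> \<epsilon> :: real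
  assumes v: "valid n h" and h0: "h 0 = 0"
    and a0: "\<And>k. 0 \<le> \<alpha> k" and am: "\<And>k. Suc k < n \<Longrightarrow> \<alpha> (Suc k) \<le> \<alpha> k"
    and d: "\<delta> > 0" and e: "\<epsilon> > 0"
    and AA: "\<And>k. AA k = max 0 (\<alpha> k - \<delta>)" and BB: "\<And>k. BB k = max 0 (\<alpha> k - \<epsilon>)"
  shows "(\<exists>h'. valid n h' \<and> h' 0 = 0 \<and> SX n \<alpha> (\<lambda>k. AA k + BB k) h \<le> SY n \<alpha> AA BB h')
       \<or> (\<exists>h'. valid n h' \<and> h' 0 = 0 \<and> SX n \<alpha> (\<lambda>k. AA k + BB k) h \<le> SX n \<alpha> (\<lambda>k. AA k + BB k) (\<lambda>k. h' k + 2) - \<delta> - \<epsilon>)"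
proof -
  let ?q = "\<lambda>k. real_of_int (max 0 (- h k))"
  have step: "\<And>k. k < n \<Longrightarrow> h (Suc k) = h k + 1 \<or> h (Suc k) = h k - 1" using v unfolding valid_def by auto
  have amono: "\<And>k l. k \<le> l \<Longrightarrow> l < n \<Longrightarrow> \<alpha> l \<le> \<alpha> k"
  proof -
    fix k l assume "k \<le> l" "l < n"
    then show "\<alpha> l \<le> \<alpha> k"
    proof (induction l)
      case 0 then show ?case by simp
    next
      case (Suc l) then show ?case using am[of l] by (cases "k = Suc l") auto
    qed
  qed
  have B0: "\<And>k. 0 \<le> BB k" using BB by simp
  have Bm: "\<And>k. Suc k < n \<Longrightarrow> BB (Suc k) \<le> BB k" unfolding BB by (intro max.mono) (use am in auto)
  show ?thesis
  proof (cases "\<forall>k\<le>n. h k \<le> 0")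
    case True
    have "SY n \<alpha> AA BB h - SX n \<alpha> (\<lambda>k. AA k + BB k) h = (\<Sum>k<n. BB k * (?q (Suc k) - ?q k))"
      unfolding SX_def SY_def sum_subtractf[symmetric]
    proof (rule sum.cong[OF refl])
      fix k assume k: "k \<in> {..<n}"
      then have "h k \<le> 0" "h (Suc k) \<le> 0" using True by auto
      then show "(if h k < h (Suc k) then AA k else BB k) - pen \<alpha> h k - ((if h k < h (Suc k) then AA k + BB k else 0) - pen \<alpha> h k) =
          BB k * (?q (Suc k) - ?q k)" using step[of k] k by auto
    qed
    also have "\<dots> \<ge> - BB 0 * ?q 0" by (rule abel) (use B0 Bm in auto)
    finally have "SX n \<alpha> (\<lambda>k. AA k + BB k) h \<le> SY n \<alpha> AA BB h" using h0 by simp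
    then show ?thesis using v h0 by blast
  next
    case False
    then obtain k1 where k1: "k1 \<le> n" "h k1 > 0" by force
    define k0 where "k0 = (LEAST k. h k > 0)"
    have hk0: "h k0 > 0" unfolding k0_def by (rule LeastI[of _ k1]) (use k1 in auto)
    have k0le: "k0 \<le> k1" unfolding k0_def by (rule Least_le) (use k1 in auto)
    have bef: "\<And>k. k < k0 \<Longrightarrow> h k \<le> 0" unfolding k0_def using not_less_Least by force
    have "k0 \<noteq> 0" using hk0 h0 by (metis less_irrefl)
    define j where "j = k0 - 1"
    have jn: "j < n" and sj: "Suc j = k0" using k0le k1 \<open>k0 \<noteq> 0\<close> unfolding j_def by auto
    have hj: "h j \<le> 0" using bef sj by auto
    have hj0: "h j = 0" and hj1: "h (Suc j) = 1" using step[OF jn] hj hk0 sj by auto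
    have befj: "\<And>k. k \<le> j \<Longrightarrow> h k \<le> 0" using bef sj by auto
    let ?w = "\<lambda>W k. if k < j then W k else (0::real)"
    have abelj: "\<And>W. (\<And>k. 0 \<le> W k) \<Longrightarrow> (\<And>k. Suc k < n \<Longrightarrow> W (Suc k) \<le> W k) \<Longrightarrow>
        (\<Sum>k<n. ?w W k * (?q (Suc k) - ?q k)) \<ge> 0"
    proof -
      fix W :: "nat \<Rightarrow> real" assume W0: "\<And>k. 0 \<le> W k" and Wm: "\<And>k. Suc k < n \<Longrightarrow> W (Suc k) \<le> W k"
      have "(\<Sum>k<n. ?w W k * (?q (Suc k) - ?q k)) \<ge> - ?w W 0 * ?q 0"
        by (rule abel) (use W0 Wm in auto)
      then show "(\<Sum>k<n. ?w W k * (?q (Suc k) - ?q k)) \<ge> 0" using h0 by simp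
    qed
    have pre: "\<And>k. k < j \<Longrightarrow> h k \<le> 0 \<and> h (Suc k) \<le> 0 \<and> (h (Suc k) = h k + 1 \<or> h (Suc k) = h k - 1)"
      using befj step jn by auto
    show ?thesis
    proof (cases "\<alpha> j \<ge> \<delta> \<and> \<alpha> j \<ge> \<epsilon>")
      case True
      define h' where "h' k = (if k \<le> j then h k else h k - 2)" for k
      have vh': "valid n h'" unfolding valid_def
      proof (intro allI impI)
        fix k assume k: "k < n"
        consider "k < j" | "k = j" | "k > j" by linarith
        then show "h' (Suc k) = h' k + 1 \<or> h' (Suc k) = h' k - 1"
          by cases (use step[OF k] hj0 hj1 in \<open>auto simp: h'_def\<close>)
      qed
      have "SX n \<alpha> (\<lambda>k. AA k + BB k) (\<lambda>k. h' k + 2) - SX n \<alpha> (\<lambda>k. AA k + BB k) h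
          = (\<Sum>k<n. ?w (\<lambda>k. 2 * \<alpha> k) k * (?q (Suc k) - ?q k) + (if k = j then \<delta> + \<epsilon> else 0))"
        unfolding SX_def sum_subtractf[symmetric]
      proof (rule sum.cong[OF refl])
        fix k assume k: "k \<in> {..<n}"
        consider "k < j" | "k = j" | "k > j" by linarith
        then show "(if h' k + 2 < h' (Suc k) + 2 then AA k + BB k else 0) - pen \<alpha> (\<lambda>k. h' k + 2) k -
          ((if h k < h (Suc k) then AA k + BB k else 0) - pen \<alpha> h k) =
          ?w (\<lambda>k. 2 * \<alpha> k) k * (?q (Suc k) - ?q k) + (if k = j then \<delta> + \<epsilon> else 0)"
        proof cases
          case 1
          from pre[OF 1] have "h k \<le> 0" "h (Suc k) \<le> 0" "h (Suc k) = h k + 1 \<or> h (Suc k) = h k - 1" by auto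
            moreover from this(3) have "real_of_int (h (Suc k)) = real_of_int (h k) + 1 \<or> real_of_int (h (Suc k)) = real_of_int (h k) - 1" by auto
            ultimately show ?thesis using 1 by (elim disjE) (simp_all (no_asm_simp) add: h'_def pen_def algebra_simps)
        next
          case 2
          then show ?thesis using hj0 hj1 True AA BB unfolding h'_def pen_def by (auto simp: algebra_simps)
        next
          case 3
          then show ?thesis unfolding h'_def pen_def by (auto simp: algebra_simps)
        qed
      qed
      also have "\<dots> = (\<Sum>k<n. ?w (\<lambda>k. 2 * \<alpha> k) k * (?q (Suc k) - ?q k)) + (\<delta> + \<epsilon>)"
        using jn by (simp add: sum.distrib)
      also have "\<dots> \<ge> \<delta> + \<epsilon>"
        using abelj[of "\<lambda>k. 2 * \<alpha> k"] a0 am by auto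
      finally show ?thesis using vh' h'_def h0 by (intro disjI2 exI[of _ h']) auto
    next
      case False
      then consider "\<alpha> j < \<delta>" | "\<alpha> j < \<epsilon>" by linarith
      then show ?thesis
      proof cases
        case 1
        have Az: "\<And>k. j \<le> k \<Longrightarrow> k < n \<Longrightarrow> AA k = 0"
          proof -
            fix k assume "j \<le> k" "k < n"
            then have "\<alpha> k \<le> \<alpha> j" by (rule amono)
            then show "AA k = 0" using 1 AA[of k] by simp
          qed
        define h' where "h' k = (if k \<le> j then h k else - h k)" for k
        have vh': "valid n h'" unfolding valid_def
        proof (intro allI impI)
          fix k assume k: "k < n"
          consider "k < j" | "k = j" | "k > j" by linarith
          then show "h' (Suc k) = h' k + 1 \<or> h' (Suc k) = h' k - 1"
            by cases (use step[OF k] hj0 hj1 in \<open>auto simp: h'_def\<close>)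
        qed
        have "SY n \<alpha> AA BB h' - SX n \<alpha> (\<lambda>k. AA k + BB k) h
          = (\<Sum>k<n. ?w BB k * (?q (Suc k) - ?q k))"
          unfolding SX_def SY_def sum_subtractf[symmetric]
        proof (rule sum.cong[OF refl])
          fix k assume k: "k \<in> {..<n}"
          consider "k < j" | "j \<le> k" by linarith
          then show "(if h' k < h' (Suc k) then AA k else BB k) - pen \<alpha> h' k -
            ((if h k < h (Suc k) then AA k + BB k else 0) - pen \<alpha> h k) =
            ?w BB k * (?q (Suc k) - ?q k)"
          proof cases
            case 1
            from pre[OF 1] have "h k \<le> 0" "h (Suc k) \<le> 0" "h (Suc k) = h k + 1 \<or> h (Suc k) = h k - 1" by auto
            moreover from this(3) have "real_of_int (h (Suc k)) = real_of_int (h k) + 1 \<or> real_of_int (h (Suc k)) = real_of_int (h k) - 1" by auto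
            ultimately show ?thesis using 1 by (elim disjE) (simp_all (no_asm_simp) add: h'_def pen_def algebra_simps)
          next
            case 2
            then have "AA k = 0" using Az k by auto
            moreover have "h' k = - h k" "h' (Suc k) = - h (Suc k)" using 2 hj0 unfolding h'_def by auto
            moreover have "pen \<alpha> h' k = pen \<alpha> h k"
              unfolding pen_def using \<open>h' k = - h k\<close> \<open>h' (Suc k) = - h (Suc k)\<close> by (simp add: algebra_simps)
            moreover from step[of k] k have "h (Suc k) = h k + 1 \<or> h (Suc k) = h k - 1" by auto
            moreover have "\<not> k < j" using 2 by simp
            ultimately show ?thesis by (elim disjE) (simp_all (no_asm_simp))
          qed
        qed
        also have "\<dots> \<ge> 0" using abelj[of BB] B0 Bm by auto
        finally show ?thesis using vh' h'_def h0 by (intro disjI1 exI[of _ h']) auto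
      next
        case 2
        have Bz: "\<And>k. j \<le> k \<Longrightarrow> k < n \<Longrightarrow> BB k = 0"
          proof -
            fix k assume "j \<le> k" "k < n"
            then have "\<alpha> k \<le> \<alpha> j" by (rule amono)
            then show "BB k = 0" using 2 BB[of k] by simp
          qed
        have "SY n \<alpha> AA BB h - SX n \<alpha> (\<lambda>k. AA k + BB k) h
          = (\<Sum>k<n. ?w BB k * (?q (Suc k) - ?q k))"
          unfolding SX_def SY_def sum_subtractf[symmetric]
        proof (rule sum.cong[OF refl])
          fix k assume k: "k \<in> {..<n}"
          consider "k < j" | "j \<le> k" by linarith
          then show "(if h k < h (Suc k) then AA k else BB k) - pen \<alpha> h k -
            ((if h k < h (Suc k) then AA k + BB k else 0) - pen \<alpha> h k) =
            ?w BB k * (?q (Suc k) - ?q k)"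
          proof cases
            case 1
            from pre[OF 1] have "h k \<le> 0" "h (Suc k) \<le> 0" "h (Suc k) = h k + 1 \<or> h (Suc k) = h k - 1" by auto
            moreover from this(3) have "real_of_int (h (Suc k)) = real_of_int (h k) + 1 \<or> real_of_int (h (Suc k)) = real_of_int (h k) - 1" by auto
            ultimately show ?thesis using 1 by (elim disjE) (simp_all (no_asm_simp) add: pen_def algebra_simps)
          next
            case 2
            then show ?thesis using Bz k by auto
          qed
        qed
        also have "\<dots> \<ge> 0" using abelj[of BB] B0 Bm by auto
        finally show ?thesis using v h0 by (intro disjI1 exI[of _ h]) auto
      qed
    qed
  qed
qed



definition PM :: "nat set \<Rightarrow> (nat \<Rightarrow> real) \<Rightarrow> real" where
  "PM I w = (\<Sum>i\<in>I. \<Sum>j\<in>I - {i}. max (w i) (w j)) / 2"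

lemma half_pairs:
  fixes g :: "nat \<Rightarrow> nat \<Rightarrow> real" and p :: "nat \<Rightarrow> 'b::linorder"
  assumes fin: "finite I" and inj: "inj_on p I" and sym: "\<And>i j. g i j = g j i"
  shows "(\<Sum>i\<in>I. \<Sum>j\<in>{j\<in>I. p j < p i}. g i j) = (\<Sum>i\<in>I. \<Sum>j\<in>I - {i}. g i j) / 2"
proof -
  let ?S1 = "\<Sum>i\<in>I. \<Sum>j\<in>{j\<in>I. p j < p i}. g i j"
  let ?S2 = "\<Sum>i\<in>I. \<Sum>j\<in>{j\<in>I. p i < p j}. g i j"
  have "?S1 = (\<Sum>i\<in>I. \<Sum>j\<in>I. if p j < p i then g i j else 0)"
    using fin by (simp add: sum.inter_filter)
  also have "\<dots> = (\<Sum>j\<in>I. \<Sum>i\<in>I. if p j < p i then g i j else 0)" by (rule sum.swap)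
  also have "\<dots> = (\<Sum>i\<in>I. \<Sum>j\<in>I. if p i < p j then g i j else 0)"
    by (rule sum.cong[OF refl], rule sum.cong[OF refl]) (simp add: sym)
  also have "\<dots> = ?S2" using fin by (simp add: sum.inter_filter)
  finally have e12: "?S1 = ?S2" .
  have "?S1 + ?S2 = (\<Sum>i\<in>I. \<Sum>j\<in>I - {i}. g i j)"
  proof -
    have "?S1 + ?S2 = (\<Sum>i\<in>I. (\<Sum>j\<in>{j\<in>I. p j < p i}. g i j) + (\<Sum>j\<in>{j\<in>I. p i < p j}. g i j))"
      by (simp add: sum.distrib)
    also have "\<dots> = (\<Sum>i\<in>I. \<Sum>j\<in>I - {i}. g i j)"
    proof (rule sum.cong[OF refl])
      fix i assume i: "i \<in> I"
      have "I - {i} = {j\<in>I. p j < p i} \<union> {j\<in>I. p i < p j}"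
      proof (rule set_eqI)
        fix x show "x \<in> I - {i} \<longleftrightarrow> x \<in> {j\<in>I. p j < p i} \<union> {j\<in>I. p i < p j}"
          using inj_on_eq_iff[OF inj, of x i] i by (cases "p x" "p i" rule: linorder_cases) auto
      qed
      moreover have "{j\<in>I. p j < p i} \<inter> {j\<in>I. p i < p j} = {}" by auto
      ultimately show "(\<Sum>j\<in>{j\<in>I. p j < p i}. g i j) + (\<Sum>j\<in>{j\<in>I. p i < p j}. g i j) = (\<Sum>j\<in>I - {i}. g i j)"
        using fin by (simp add: sum.union_disjoint)
    qed
    finally show ?thesis .
  qed
  with e12 show ?thesis by simp
qed

lemma card_below:
  assumes p: "p permutes {1..N}" and i: "i \<in> {1..N}"
  shows "card {j\<in>{1..N}. p j < p i} = p i - 1"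
proof -
  have bij: "bij_betw p {1..N} {1..N}" using permutes_imp_bij[OF p] .
  have inj: "inj_on p {1..N}" and img: "p ` {1..N} = {1..N}" using bij unfolding bij_betw_def by auto
  have pi: "p i \<in> {1..N}" using permutes_in_image[OF p] i by simp
  have eq: "p ` {j\<in>{1..N}. p j < p i} = {1..<p i}"
  proof
    show "p ` {j\<in>{1..N}. p j < p i} \<subseteq> {1..<p i}"
    proof
      fix x assume "x \<in> p ` {j\<in>{1..N}. p j < p i}"
      then obtain j where j: "j \<in> {1..N}" "p j < p i" "x = p j" by blast
      have "p j \<in> {1..N}" using j(1) img by blast
      then show "x \<in> {1..<p i}" using j by simp
    qed
    show "{1..<p i} \<subseteq> p ` {j\<in>{1..N}. p j < p i}"
    proof
      fix x assume x: "x \<in> {1..<p i}"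
      then have "x \<in> {1..N}" using pi by simp
      then have "x \<in> p ` {1..N}" using img by simp
      then obtain j where j: "j \<in> {1..N}" "x = p j" by blast
      then have "j \<in> {j\<in>{1..N}. p j < p i}" using x by simp
      then show "x \<in> p ` {j\<in>{1..N}. p j < p i}" using j(2) by (rule rev_image_eqI)
    qed
  qed
  have "inj_on p {j\<in>{1..N}. p j < p i}" using inj by (rule inj_on_subset) blast
  then have "card {j\<in>{1..N}. p j < p i} = card (p ` {j\<in>{1..N}. p j < p i})" by (simp add: card_image)
  also have "\<dots> = p i - 1" using eq by simp
  finally show ?thesis .
qed

lemma perm_sum_le:
  assumes p: "p permutes {1..N}"
  shows "(\<Sum>i\<in>{1..N}. w i * (real (p i) - 1)) \<le> PM {1..N} w"
proof -
  have inj: "inj_on p {1..N}" using permutes_imp_bij[OF p] unfolding bij_betw_def by auto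
  have pi: "\<And>i. i \<in> {1..N} \<Longrightarrow> p i \<in> {1..N}" using permutes_in_image[OF p] by auto
  have "(\<Sum>i\<in>{1..N}. w i * (real (p i) - 1)) = (\<Sum>i\<in>{1..N}. \<Sum>j\<in>{j\<in>{1..N}. p j < p i}. w i)"
  proof (rule sum.cong[OF refl])
    fix i assume i: "i \<in> {1..N}"
    have "p i \<ge> 1" using pi[OF i] by auto
    then show "w i * (real (p i) - 1) = (\<Sum>j\<in>{j\<in>{1..N}. p j < p i}. w i)"
      using card_below[OF p i] by (simp add: of_nat_diff)
  qed
  also have "\<dots> \<le> (\<Sum>i\<in>{1..N}. \<Sum>j\<in>{j\<in>{1..N}. p j < p i}. max (w i) (w j))"
    by (intro sum_mono) auto
  also have "\<dots> = PM {1..N} w" unfolding PM_def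
    by (rule half_pairs[OF _ inj]) (auto simp: max.commute)
  finally show ?thesis .
qed

lemma sort_enum:
  fixes f :: "nat \<Rightarrow> real"
  assumes "finite M"
  shows "\<exists>e. bij_betw e {..<card M} M \<and> (\<forall>k l. k \<le> l \<longrightarrow> l < card M \<longrightarrow> f (e k) \<le> f (e l))"
proof -
  define xs where "xs = sort_key f (sorted_list_of_set M)"
  have d: "distinct xs" and s: "set xs = M" and len: "length xs = card M" and so: "sorted (map f xs)"
    using assms unfolding xs_def by (auto simp: distinct_card[symmetric])
  have "bij_betw ((!) xs) {..<card M} M" by (rule bij_betw_nth) (use d s len in auto)
  moreover have "\<forall>k l. k \<le> l \<longrightarrow> l < card M \<longrightarrow> f (xs ! k) \<le> f (xs ! l)"
    using so len by (auto simp: sorted_iff_nth_mono)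
  ultimately show ?thesis by blast
qed

lemma sort_perm:
  fixes w :: "nat \<Rightarrow> real"
  shows "\<exists>p. p permutes {1..N} \<and> (\<forall>i\<in>{1..N}. \<forall>j\<in>{1..N}. p j < p i \<longrightarrow> w j \<le> w i)"
proof -
  obtain e where e: "bij_betw e {..<N} {1..N}" and mono: "\<forall>k l. k \<le> l \<longrightarrow> l < N \<longrightarrow> w (e k) \<le> w (e l)"
    using sort_enum[of "{1..N}" w] by auto
  define q where "q k = (if k \<in> {1..N} then e (k - 1) else k)" for k
  have "bij_betw (\<lambda>k. k - 1) {1..N} {..<N}"
    by (rule bij_betw_byWitness[where f'="\<lambda>k. k + 1"]) auto
  then have "bij_betw (e \<circ> (\<lambda>k. k - 1)) {1..N} {1..N}" using e by (rule bij_betw_trans)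
  moreover have "\<And>k. k \<in> {1..N} \<Longrightarrow> (e \<circ> (\<lambda>k. k - 1)) k = q k" by (simp add: q_def)
  ultimately have "bij_betw q {1..N} {1..N}" using bij_betw_cong[of "{1..N}" "e \<circ> (\<lambda>k. k - 1)" q "{1..N}"] by blast
  then have qp: "q permutes {1..N}" by (rule bij_imp_permutes) (auto simp: q_def)
  define p where "p = inv q"
  have pp: "p permutes {1..N}" unfolding p_def using qp by (rule permutes_inv)
  have "\<forall>i\<in>{1..N}. \<forall>j\<in>{1..N}. p j < p i \<longrightarrow> w j \<le> w i"
  proof (intro ballI impI)
    fix i j assume i: "i \<in> {1..N}" and j: "j \<in> {1..N}" and lt: "p j < p i"
    have qi: "q (p i) = i" and qj: "q (p j) = j" unfolding p_def using permutes_inverses(1)[OF qp] by auto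
    have pi: "p i \<in> {1..N}" and pj: "p j \<in> {1..N}" using permutes_in_image[OF pp] i j by auto
    have "w (e (p j - 1)) \<le> w (e (p i - 1))" using mono lt pi pj by auto
    then show "w j \<le> w i" using qi qj pi pj unfolding q_def by auto
  qed
  with pp show ?thesis by blast
qed

lemma perm_sum_eq:
  assumes p: "p permutes {1..N}" and srt: "\<forall>i\<in>{1..N}. \<forall>j\<in>{1..N}. p j < p i \<longrightarrow> w j \<le> w i"
  shows "(\<Sum>i\<in>{1..N}. w i * (real (p i) - 1)) = PM {1..N} w"
proof -
  have inj: "inj_on p {1..N}" using permutes_imp_bij[OF p] unfolding bij_betw_def by auto
  have pi: "\<And>i. i \<in> {1..N} \<Longrightarrow> p i \<in> {1..N}" using permutes_in_image[OF p] by auto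
  have "(\<Sum>i\<in>{1..N}. w i * (real (p i) - 1)) = (\<Sum>i\<in>{1..N}. \<Sum>j\<in>{j\<in>{1..N}. p j < p i}. w i)"
  proof (rule sum.cong[OF refl])
    fix i assume i: "i \<in> {1..N}"
    have "p i \<ge> 1" using pi[OF i] by auto
    then show "w i * (real (p i) - 1) = (\<Sum>j\<in>{j\<in>{1..N}. p j < p i}. w i)"
      using card_below[OF p i] by (simp add: of_nat_diff)
  qed
  also have "\<dots> = (\<Sum>i\<in>{1..N}. \<Sum>j\<in>{j\<in>{1..N}. p j < p i}. max (w i) (w j))"
  proof (intro sum.cong refl)
    fix i j assume i: "i \<in> {1..N}" and j: "j \<in> {j \<in> {1..N}. p j < p i}"
    then have "w j \<le> w i" using srt by auto
    then show "w i = max (w i) (w j)" by simp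
  qed
  also have "\<dots> = PM {1..N} w" unfolding PM_def
    by (rule half_pairs[OF _ inj]) (auto simp: max.commute)
  finally show ?thesis .
qed

definition EEg :: "nat set \<Rightarrow> (nat \<Rightarrow> real) \<Rightarrow> (nat \<Rightarrow> real) \<Rightarrow> (nat \<Rightarrow> real) \<Rightarrow> nat set \<Rightarrow> real" where
  "EEg I a f g P = (\<Sum>i\<in>I. if i \<in> P then f i else g i) + PM I (\<lambda>i. if i \<in> P then a i else - a i)"

lemma up_eq:
  "updisc N (\<lambda>i j. max (f i + a i * (real j - 1)) (g i - a i * (real j - 1))) = Max (EEg {1..N} a f g ` Pow {1..N})"
  (is "updisc N ?M = Max ?E")
proof -
  let ?I = "{1..N::nat}"
  let ?S = "(\<lambda>p. \<Sum>i\<in>?I. ?M i (p i)) ` {p. p permutes ?I}"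
  have finS: "finite ?S" by (simp add: finite_permutations)
  have neS: "?S \<noteq> {}" using permutes_id[of ?I] by blast
  have finE: "finite ?E" by simp
  have neE: "?E \<noteq> {}" by blast
  have "Max ?S \<le> Max ?E"
  proof (rule Max.boundedI[OF finS neS])
    fix x assume "x \<in> ?S"
    then obtain p where p: "p permutes ?I" and x: "x = (\<Sum>i\<in>?I. ?M i (p i))" by blast
    define P where "P = {i\<in>?I. g i - a i * (real (p i) - 1) \<le> f i + a i * (real (p i) - 1)}"
    let ?w = "\<lambda>i. if i \<in> P then a i else - a i"
    have "x = (\<Sum>i\<in>?I. (if i \<in> P then f i else g i) + ?w i * (real (p i) - 1))"
      unfolding x by (intro sum.cong refl) (auto simp: P_def max_def algebra_simps)
    also have "\<dots> = (\<Sum>i\<in>?I. if i \<in> P then f i else g i) + (\<Sum>i\<in>?I. ?w i * (real (p i) - 1))"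
      by (simp add: sum.distrib)
    also have "\<dots> \<le> (\<Sum>i\<in>?I. if i \<in> P then f i else g i) + PM ?I ?w"
      using perm_sum_le[OF p, of ?w] by simp
    also have "\<dots> = EEg ?I a f g P" unfolding EEg_def by simp
    also have "\<dots> \<le> Max ?E" by (rule Max_ge[OF finE]) (auto simp: P_def)
    finally show "x \<le> Max ?E" .
  qed
  moreover have "Max ?E \<le> Max ?S"
  proof (rule Max.boundedI[OF finE neE])
    fix x assume "x \<in> ?E"
    then obtain P where P: "P \<in> Pow ?I" and x: "x = EEg ?I a f g P" by blast
    let ?w = "\<lambda>i. if i \<in> P then a i else - a i"
    obtain p where p: "p permutes ?I" and srt: "\<forall>i\<in>?I. \<forall>j\<in>?I. p j < p i \<longrightarrow> ?w j \<le> ?w i"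
      using sort_perm[of N ?w] by blast
    have "x = (\<Sum>i\<in>?I. if i \<in> P then f i else g i) + (\<Sum>i\<in>?I. ?w i * (real (p i) - 1))"
      unfolding x EEg_def using perm_sum_eq[OF p srt] by simp
    also have "\<dots> = (\<Sum>i\<in>?I. (if i \<in> P then f i else g i) + ?w i * (real (p i) - 1))"
      by (simp add: sum.distrib)
    also have "\<dots> = (\<Sum>i\<in>?I. (if i \<in> P then f i + a i * (real (p i) - 1) else g i - a i * (real (p i) - 1)))"
      by (rule sum.cong[OF refl]) (auto simp: algebra_simps)
    also have "\<dots> \<le> (\<Sum>i\<in>?I. ?M i (p i))"
      by (intro sum_mono) auto
    also have "\<dots> \<le> Max ?S" by (rule Max_ge[OF finS]) (use p in blast)
    finally show "x \<le> Max ?S" .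
  qed
  ultimately show ?thesis unfolding updisc_def by simp
qed



definition wv :: "(nat \<Rightarrow> real) \<Rightarrow> nat set \<Rightarrow> nat \<Rightarrow> real" where
  "wv a P i = (if i \<in> P then a i else - a i)"

definition gM :: "(nat \<Rightarrow> real) \<Rightarrow> nat set \<Rightarrow> nat \<Rightarrow> nat \<Rightarrow> real" where
  "gM a U i j = (if (i \<in> U) = (j \<in> U) then \<bar>a i - a j\<bar> else a i + a j)"

definition GG :: "(nat \<Rightarrow> real) \<Rightarrow> nat set \<Rightarrow> nat set \<Rightarrow> nat set \<Rightarrow> nat \<Rightarrow> nat \<Rightarrow> real" where
  "GG a C M U i j = max (wv a (C \<union> (M - U)) i) (wv a (C \<union> (M - U)) j) + max (wv a (C \<union> U) i) (wv a (C \<union> U) j)"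

lemma GG_cases:
  assumes a0: "\<And>i. 0 \<le> a i" and CM: "C \<inter> M = {}" and U: "U \<subseteq> M"
  shows "GG a C M U i j = (if i \<in> M \<and> j \<in> M then gM a U i j else GG a C M {} i j)"
proof -
  have ai: "0 \<le> a i" and aj: "0 \<le> a j" using a0 by auto
  consider "i \<in> M" "j \<in> M" | "i \<in> M" "j \<notin> M" | "i \<notin> M" "j \<in> M" | "i \<notin> M" "j \<notin> M" by blast
  then show ?thesis
  proof cases
    case 1 then show ?thesis using ai aj CM U unfolding GG_def gM_def wv_def by (auto simp: max_def abs_if)
  next
    case 2 then show ?thesis using ai aj CM U unfolding GG_def gM_def wv_def by (auto simp: max_def)
  next
    case 3 then show ?thesis using ai aj CM U unfolding GG_def gM_def wv_def by (auto simp: max_def)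
  next
    case 4 then show ?thesis using ai aj CM U unfolding GG_def gM_def wv_def by (auto simp: max_def)
  qed
qed

definition Dm :: "(nat \<Rightarrow> real) \<Rightarrow> nat set \<Rightarrow> nat set \<Rightarrow> real" where
  "Dm a M U = (\<Sum>i\<in>M. \<Sum>j\<in>M - {i}. gM a U i j) / 2"

lemma PMpair_split:
  assumes a0: "\<And>i. 0 \<le> a i" and CM: "C \<inter> M = {}" and U: "U \<subseteq> M" and MI: "M \<subseteq> I" and fin: "finite I"
  shows "PM I (wv a (C \<union> (M - U))) + PM I (wv a (C \<union> U))
       = Dm a M U + (\<Sum>i\<in>I. \<Sum>j\<in>I - {i}. if i \<in> M \<and> j \<in> M then 0 else GG a C M {} i j) / 2"
proof -
  have "PM I (wv a (C \<union> (M - U))) + PM I (wv a (C \<union> U)) = (\<Sum>i\<in>I. \<Sum>j\<in>I - {i}. GG a C M U i j) / 2"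
    unfolding PM_def GG_def by (simp add: sum.distrib add_divide_distrib)
  also have "(\<Sum>i\<in>I. \<Sum>j\<in>I - {i}. GG a C M U i j)
      = (\<Sum>i\<in>I. \<Sum>j\<in>I - {i}. (if i \<in> M \<and> j \<in> M then gM a U i j else 0) + (if i \<in> M \<and> j \<in> M then 0 else GG a C M {} i j))"
    using GG_cases[OF a0 CM U] by (intro sum.cong refl) simp
  also have "\<dots> = (\<Sum>i\<in>I. \<Sum>j\<in>I - {i}. if i \<in> M \<and> j \<in> M then gM a U i j else 0)
      + (\<Sum>i\<in>I. \<Sum>j\<in>I - {i}. if i \<in> M \<and> j \<in> M then 0 else GG a C M {} i j)"
    by (simp add: sum.distrib)
  also have "(\<Sum>i\<in>I. \<Sum>j\<in>I - {i}. if i \<in> M \<and> j \<in> M then gM a U i j else 0) = (\<Sum>i\<in>M. \<Sum>j\<in>M - {i}. gM a U i j)"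
  proof -
    have "(\<Sum>i\<in>I. \<Sum>j\<in>I - {i}. if i \<in> M \<and> j \<in> M then gM a U i j else 0)
        = (\<Sum>i\<in>I. if i \<in> M then (\<Sum>j\<in>M - {i}. gM a U i j) else 0)"
    proof (intro sum.cong refl)
      fix i assume i: "i \<in> I"
      have "(\<Sum>j\<in>I - {i}. if i \<in> M \<and> j \<in> M then gM a U i j else 0) = (\<Sum>j\<in>I - {i}. if j \<in> M - {i} then (if i \<in> M then gM a U i j else 0) else 0)"
        by (intro sum.cong refl) auto
      also have "\<dots> = (\<Sum>j\<in>(I - {i}) \<inter> (M - {i}). if i \<in> M then gM a U i j else 0)"
        by (rule sum.inter_restrict[symmetric]) (use fin in auto)
      also have "(I - {i}) \<inter> (M - {i}) = M - {i}" using MI by auto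
      finally show "(\<Sum>j\<in>I - {i}. if i \<in> M \<and> j \<in> M then gM a U i j else 0) = (if i \<in> M then (\<Sum>j\<in>M - {i}. gM a U i j) else 0)"
        by simp
    qed
    also have "\<dots> = (\<Sum>i\<in>M. \<Sum>j\<in>M - {i}. gM a U i j)"
      using fin MI by (simp add: sum.If_cases Int_absorb1)
    finally show ?thesis .
  qed
  finally show ?thesis unfolding Dm_def by (simp add: add_divide_distrib)
qed

definition hU :: "(nat \<Rightarrow> nat) \<Rightarrow> nat set \<Rightarrow> nat \<Rightarrow> int" where
  "hU e U k = (\<Sum>l<k. if e l \<in> U then 1 else -1)"

lemma hU_Suc: "hU e U (Suc k) = hU e U k + (if e k \<in> U then 1 else -1)"
  unfolding hU_def by simp

lemma hU_valid: "valid n (hU e U)"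
  unfolding valid_def by (auto simp: hU_Suc)

lemma hU_0: "hU e U 0 = 0"
  by (simp add: hU_def)

lemma Dm_walk:
  assumes e: "bij_betw e {..<n} M" and mono: "\<And>k l. k \<le> l \<Longrightarrow> l < n \<Longrightarrow> a (e l) \<le> a (e k)"
  shows "Dm a M U = (\<Sum>k<n. \<Sum>l<k. a (e l)) - (\<Sum>k<n. pen (a \<circ> e) (hU e U) k)"
proof -
  have inj: "inj_on e {..<n}" and img: "e ` {..<n} = M" using e unfolding bij_betw_def by auto
  have "(\<Sum>i\<in>M. \<Sum>j\<in>M - {i}. gM a U i j) = (\<Sum>k<n. \<Sum>j\<in>M - {e k}. gM a U (e k) j)"
    using sum.reindex[OF inj, of "\<lambda>i. \<Sum>j\<in>M - {i}. gM a U i j"] img by simp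
  also have "\<dots> = (\<Sum>k<n. \<Sum>l\<in>{..<n} - {k}. gM a U (e k) (e l))"
  proof (rule sum.cong[OF refl])
    fix k assume k: "k \<in> {..<n}"
    have "M - {e k} = e ` ({..<n} - {k})" using img inj k by (auto simp: inj_on_image_set_diff)
    moreover have "inj_on e ({..<n} - {k})" using inj_on_subset[OF inj, of "{..<n} - {k}"] by blast
    ultimately show "(\<Sum>j\<in>M - {e k}. gM a U (e k) j) = (\<Sum>l\<in>{..<n} - {k}. gM a U (e k) (e l))"
      by (simp add: sum.reindex)
  qed
  finally have "Dm a M U = (\<Sum>k<n. \<Sum>l\<in>{..<n} - {k}. gM a U (e k) (e l)) / 2" unfolding Dm_def by simp
  also have "\<dots> = (\<Sum>k<n. \<Sum>l\<in>{l\<in>{..<n}. id l < id k}. gM a U (e k) (e l))"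
    by (rule half_pairs[symmetric]) (auto simp: gM_def abs_minus_commute add.commute)
  also have "\<dots> = (\<Sum>k<n. \<Sum>l<k. a (e l) - of_int ((if e l \<in> U then 1 else -1) * (if e k \<in> U then 1 else -1)) * a (e k))"
  proof (rule sum.cong[OF refl])
    fix k assume k: "k \<in> {..<n}"
    have set: "{l\<in>{..<n}. id l < id k} = {..<k}" using k by auto
    show "(\<Sum>l\<in>{l\<in>{..<n}. id l < id k}. gM a U (e k) (e l)) =
      (\<Sum>l<k. a (e l) - of_int ((if e l \<in> U then 1 else -1) * (if e k \<in> U then 1 else -1)) * a (e k))"
      unfolding set
    proof (rule sum.cong[OF refl])
      fix l assume l: "l \<in> {..<k}"
      have "a (e k) \<le> a (e l)" using mono[of l k] l k by auto
      then show "gM a U (e k) (e l) = a (e l) - of_int ((if e l \<in> U then 1 else -1) * (if e k \<in> U then 1 else -1)) * a (e k)"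
        unfolding gM_def by auto
    qed
  qed
  also have "\<dots> = (\<Sum>k<n. \<Sum>l<k. a (e l)) - (\<Sum>k<n. pen (a \<circ> e) (hU e U) k)"
  proof -
    have "(\<Sum>k<n. \<Sum>l<k. a (e l) - of_int ((if e l \<in> U then 1 else -1) * (if e k \<in> U then 1 else -1)) * a (e k))
        = (\<Sum>k<n. (\<Sum>l<k. a (e l)) - pen (a \<circ> e) (hU e U) k)"
    proof (rule sum.cong[OF refl])
      fix k
      have "(\<Sum>l<k. of_int ((if e l \<in> U then 1 else -1) * (if e k \<in> U then 1 else -1)) * a (e k))
          = a (e k) * of_int (if e k \<in> U then 1 else -1) * (\<Sum>l<k. of_int (if e l \<in> U then 1 else -1) :: real)"
        unfolding sum_distrib_left by (rule sum.cong[OF refl]) (simp add: algebra_simps)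
      also have "\<dots> = pen (a \<circ> e) (hU e U) k"
        unfolding pen_def hU_Suc by (simp add: hU_def)
      finally show "(\<Sum>l<k. a (e l) - of_int ((if e l \<in> U then 1 else -1) * (if e k \<in> U then 1 else -1)) * a (e k))
          = (\<Sum>l<k. a (e l)) - pen (a \<circ> e) (hU e U) k"
        by (simp add: sum_subtractf)
    qed
    then show ?thesis by (simp add: sum_subtractf)
  qed
  finally show ?thesis .
qed



lemma sum_restrict: "finite I \<Longrightarrow> S \<subseteq> I \<Longrightarrow> (\<Sum>i\<in>I. if i \<in> S then x i else 0) = (\<Sum>i\<in>S. x i)"
  by (simp add: sum.inter_restrict[symmetric] Int_absorb1)

lemma EEg_wv: "EEg I a f g P = (\<Sum>i\<in>I. if i \<in> P then f i else g i) + PM I (wv a P)"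
  unfolding EEg_def wv_def[abs_def] by simp

lemma VAL:
  assumes a0: "\<And>i. 0 \<le> a i" and CM: "C \<inter> M = {}" and U: "U \<subseteq> M" and MI: "M \<subseteq> I" and CI: "C \<subseteq> I"
    and fin: "finite I"
    and e: "bij_betw e {..<n} M" and mono: "\<And>k l. k \<le> l \<Longrightarrow> l < n \<Longrightarrow> a (e l) \<le> a (e k)"
  shows "EEg I a f1 f2 (C \<union> (M - U)) + EEg I a g1 g2 (C \<union> U)
    = ((\<Sum>i\<in>C. f1 i + g1 i) + (\<Sum>i\<in>I - (C \<union> M). f2 i + g2 i)
       + (\<Sum>i\<in>I. \<Sum>j\<in>I - {i}. if i \<in> M \<and> j \<in> M then 0 else GG a C M {} i j) / 2
       + (\<Sum>k<n. \<Sum>l<k. a (e l)))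
      + (\<Sum>k<n. (if e k \<in> U then f2 (e k) + g1 (e k) else f1 (e k) + g2 (e k)))
      - (\<Sum>k<n. pen (a \<circ> e) (hU e U) k)"
proof -
  have inj: "inj_on e {..<n}" and img: "e ` {..<n} = M" using e unfolding bij_betw_def by auto
  have items: "(\<Sum>i\<in>I. if i \<in> C \<union> (M - U) then f1 i else f2 i) + (\<Sum>i\<in>I. if i \<in> C \<union> U then g1 i else g2 i)
      = (\<Sum>i\<in>C. f1 i + g1 i) + (\<Sum>i\<in>I - (C \<union> M). f2 i + g2 i) + (\<Sum>i\<in>M. if i \<in> U then f2 i + g1 i else f1 i + g2 i)"
  proof -
    have "(\<Sum>i\<in>I. if i \<in> C \<union> (M - U) then f1 i else f2 i) + (\<Sum>i\<in>I. if i \<in> C \<union> U then g1 i else g2 i)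
        = (\<Sum>i\<in>I. (if i \<in> C then f1 i + g1 i else 0) + (if i \<in> I - (C \<union> M) then f2 i + g2 i else 0)
              + (if i \<in> M then (if i \<in> U then f2 i + g1 i else f1 i + g2 i) else 0))"
      unfolding sum.distrib[symmetric]
    proof (rule sum.cong[OF refl])
      fix i assume "i \<in> I"
      then show "(if i \<in> C \<union> (M - U) then f1 i else f2 i) + (if i \<in> C \<union> U then g1 i else g2 i) =
          (if i \<in> C then f1 i + g1 i else 0) + (if i \<in> I - (C \<union> M) then f2 i + g2 i else 0) +
          (if i \<in> M then if i \<in> U then f2 i + g1 i else f1 i + g2 i else 0)"
        using CM U by auto
    qed
    also have "\<dots> = (\<Sum>i\<in>I. if i \<in> C then f1 i + g1 i else 0) + (\<Sum>i\<in>I. if i \<in> I - (C \<union> M) then f2 i + g2 i else 0)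
              + (\<Sum>i\<in>I. if i \<in> M then (if i \<in> U then f2 i + g1 i else f1 i + g2 i) else 0)"
      by (simp only: sum.distrib)
    also have "\<dots> = (\<Sum>i\<in>C. f1 i + g1 i) + (\<Sum>i\<in>I - (C \<union> M). f2 i + g2 i) + (\<Sum>i\<in>M. if i \<in> U then f2 i + g1 i else f1 i + g2 i)"
      by (simp only: sum_restrict[OF fin CI] sum_restrict[OF fin Diff_subset] sum_restrict[OF fin MI])
    finally show ?thesis .
  qed
  have Msum: "(\<Sum>i\<in>M. if i \<in> U then f2 i + g1 i else f1 i + g2 i) = (\<Sum>k<n. (if e k \<in> U then f2 (e k) + g1 (e k) else f1 (e k) + g2 (e k)))"
    using sum.reindex[OF inj, of "\<lambda>i. if i \<in> U then f2 i + g1 i else f1 i + g2 i"] img by simp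
  have pm: "PM I (wv a (C \<union> (M - U))) + PM I (wv a (C \<union> U))
       = Dm a M U + (\<Sum>i\<in>I. \<Sum>j\<in>I - {i}. if i \<in> M \<and> j \<in> M then 0 else GG a C M {} i j) / 2"
    by (rule PMpair_split[OF a0 CM U MI fin])
  show ?thesis
    unfolding EEg_wv using items Msum pm Dm_walk[of e n M a U] e mono by (simp add: algebra_simps)
qed

lemma SX_agree: "(\<And>k. k \<le> n \<Longrightarrow> h k = h' k) \<Longrightarrow> SX n \<alpha> cc h = SX n \<alpha> cc h'"
  unfolding SX_def pen_def by (intro sum.cong refl) auto

lemma SY_agree: "(\<And>k. k \<le> n \<Longrightarrow> h k = h' k) \<Longrightarrow> SY n \<alpha> AA BB h = SY n \<alpha> AA BB h'"
  unfolding SY_def pen_def by (intro sum.cong refl) auto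

lemma hU_walk:
  assumes e: "bij_betw e {..<n} M" and v: "valid n h" and h0: "h 0 = 0"
  shows "k \<le> n \<Longrightarrow> hU e (e ` {k. k < n \<and> h k < h (Suc k)}) k = h k"
proof (induction k)
  case 0 then show ?case using h0 by (simp add: hU_0)
next
  case (Suc k)
  have inj: "inj_on e {..<n}" using e unfolding bij_betw_def by auto
  have k: "k < n" using Suc.prems by simp
  have mem: "e k \<in> e ` {k. k < n \<and> h k < h (Suc k)} \<longleftrightarrow> h k < h (Suc k)"
  proof
    assume "e k \<in> e ` {k. k < n \<and> h k < h (Suc k)}"
    then obtain k' where "k' < n" "h k' < h (Suc k')" "e k = e k'" by auto
    then show "h k < h (Suc k)" using inj k by (metis inj_onD lessThan_iff)
  qed (use k in auto)
  have st: "h (Suc k) = h k + 1 \<or> h (Suc k) = h k - 1" using v k unfolding valid_def by auto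
  show ?case using Suc.IH Suc.prems mem st by (auto simp: hU_Suc)
qed

lemma walk_sub: "bij_betw e {..<n} M \<Longrightarrow> e ` {k. k < n \<and> h k < h (Suc k)} \<subseteq> M"
  unfolding bij_betw_def by auto

lemma hU_up: "e k \<in> U \<longleftrightarrow> hU e U k < hU e U (Suc k)"
  by (simp add: hU_Suc)

lemma formX:
  "(\<Sum>k<n. if e k \<in> U then F2 (e k) + G1 (e k) else F1 (e k) + G2 (e k)) - (\<Sum>k<n. pen \<alpha> (hU e U) k)
   = (\<Sum>k<n. F1 (e k) + G2 (e k)) + SX n \<alpha> (\<lambda>k. F2 (e k) + G1 (e k) - F1 (e k) - G2 (e k)) (hU e U)"
  unfolding SX_def hU_up[symmetric]
  by (simp add: sum.distrib[symmetric] sum_subtractf[symmetric]) (rule sum.cong[OF refl], simp)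

lemma formY:
  "(\<Sum>k<n. if e k \<in> U then F2 (e k) + G1 (e k) else F1 (e k) + G2 (e k)) - (\<Sum>k<n. pen \<alpha> (hU e U) k)
   = SY n \<alpha> (\<lambda>k. F2 (e k) + G1 (e k)) (\<lambda>k. F1 (e k) + G2 (e k)) (hU e U)"
  unfolding SY_def hU_up[symmetric]
  by (simp add: sum_subtractf[symmetric])

lemma pen_shift: "pen \<alpha> (\<lambda>k. h k + 2) k = pen \<alpha> h k + 2 * \<alpha> k * of_int (h (Suc k) - h k)"
  unfolding pen_def by (simp add: algebra_simps)

lemma SY_shift: "SY n \<alpha> (\<lambda>k. AA k + d k) (\<lambda>k. BB k + d k) h = (\<Sum>k<n. d k) + SY n \<alpha> AA BB h"
  unfolding SY_def by (simp add: sum.distrib[symmetric]) (rule sum.cong[OF refl], simp)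

lemma SX_shift2: "SX n \<alpha> cc (\<lambda>k. hU e U k + 2) = (\<Sum>k<n. 2 * \<alpha> k) + SX n \<alpha> (\<lambda>k. cc k - 4 * \<alpha> k) (hU e U)"
  unfolding SX_def pen_shift by (simp add: sum.distrib[symmetric]) (rule sum.cong[OF refl], simp add: hU_Suc algebra_simps)

lemma pair_claims:
  fixes a f g :: "nat \<Rightarrow> real" and \<delta> \<epsilon> :: real and N :: nat
  defines "I \<equiv> {1..N}" and "A \<equiv> \<lambda>i. max 0 (a i - \<delta>)" and "B \<equiv> \<lambda>i. max 0 (a i - \<epsilon>)"
  defines "X1 \<equiv> EEg I a f (\<lambda>i. g i + B i)" and "X2 \<equiv> EEg I a (\<lambda>i. f i + A i) g"
      and "Y1 \<equiv> EEg I a f g" and "Y2 \<equiv> EEg I a (\<lambda>i. f i + A i) (\<lambda>i. g i + B i)"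
      and "Z1 \<equiv> EEg I a (\<lambda>i. f i + a i) (\<lambda>i. g i + B i - a i)" and "Z2 \<equiv> EEg I a (\<lambda>i. f i + A i - a i) (\<lambda>i. g i + a i)"
  assumes a0: "\<And>i. 0 \<le> a i" and d: "\<delta> > 0" and ep: "\<epsilon> > 0" and P: "P \<subseteq> I" and Q: "Q \<subseteq> I"
  shows "(\<exists>P' Q'. P' \<subseteq> I \<and> Q' \<subseteq> I \<and> Y1 P + Y2 Q \<le> X1 P' + X2 Q')
       \<and> (\<exists>P' Q'. P' \<subseteq> I \<and> Q' \<subseteq> I \<and> Z1 P + Z2 Q - \<delta> - \<epsilon> \<le> X1 P' + X2 Q')
       \<and> (\<exists>P' Q'. P' \<subseteq> I \<and> Q' \<subseteq> I \<and> (X1 P + X2 Q \<le> Y1 P' + Y2 Q' \<or> X1 P + X2 Q \<le> Z1 P' + Z2 Q' - \<delta> - \<epsilon>))"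
proof -
  define C where "C = P \<inter> Q"
  define M where "M = (P - Q) \<union> (Q - P)"
  define U0 where "U0 = Q - P"
  have CM: "C \<inter> M = {}" and U0M: "U0 \<subseteq> M" and MI: "M \<subseteq> I" and CI: "C \<subseteq> I" and fin: "finite I"
    using P Q unfolding C_def M_def U0_def I_def by auto
  have Peq: "P = C \<union> (M - U0)" and Qeq: "Q = C \<union> U0" unfolding C_def M_def U0_def by auto
  have finM: "finite M" using MI fin by (rule finite_subset)
  obtain e where e: "bij_betw e {..<card M} M" and srt: "\<forall>k l. k \<le> l \<longrightarrow> l < card M \<longrightarrow> - a (e k) \<le> - a (e l)"
    using sort_enum[OF finM, of "\<lambda>i. - a i"] by blast
  define n where "n = card M"
  have e': "bij_betw e {..<n} M" using e unfolding n_def .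
  have mono: "\<And>k l. k \<le> l \<Longrightarrow> l < n \<Longrightarrow> a (e l) \<le> a (e k)" using srt unfolding n_def by force
  define \<alpha> where "\<alpha> = a \<circ> e"
  define AA where "AA k = max 0 (\<alpha> k - \<delta>)" for k
  define BB where "BB k = max 0 (\<alpha> k - \<epsilon>)" for k
  have AAd: "\<And>k. AA k = max 0 (\<alpha> k - \<delta>)" and BBd: "\<And>k. BB k = max 0 (\<alpha> k - \<epsilon>)" by (simp_all add: AA_def BB_def)
  have AAe: "\<And>k. AA k = A (e k)" and BBe: "\<And>k. BB k = B (e k)" unfolding AA_def BB_def A_def B_def \<alpha>_def by auto
  have al0: "\<And>k. 0 \<le> \<alpha> k" unfolding \<alpha>_def using a0 by simp
  have am: "\<And>k. Suc k < n \<Longrightarrow> \<alpha> (Suc k) \<le> \<alpha> k" unfolding \<alpha>_def using mono by simp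
  define Rest where "Rest = (\<Sum>i\<in>I. \<Sum>j\<in>I - {i}. if i \<in> M \<and> j \<in> M then 0 else GG a C M {} i j) / 2 + (\<Sum>k<n. \<Sum>l<k. a (e l))"
  define K where "K = (\<Sum>i\<in>C. f i + (f i + A i)) + (\<Sum>i\<in>I - (C \<union> M). g i + B i + g i) + Rest + (\<Sum>k<n. f (e k) + g (e k))"
  note V = VAL[where a=a and C=C and M=M and I=I and e=e and n=n, OF a0 CM _ MI CI fin e' mono]
  have PhiX: "X1 (C \<union> (M - U)) + X2 (C \<union> U) = K + SX n \<alpha> (\<lambda>k. AA k + BB k) (hU e U)" if U: "U \<subseteq> M" for U
  proof -
    have "X1 (C \<union> (M - U)) + X2 (C \<union> U) = ((\<Sum>i\<in>C. f i + (f i + A i)) + (\<Sum>i\<in>I - (C \<union> M). g i + B i + g i) + Rest)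
       + ((\<Sum>k<n. if e k \<in> U then g (e k) + B (e k) + (f (e k) + A (e k)) else f (e k) + g (e k)) - (\<Sum>k<n. pen \<alpha> (hU e U) k))"
      using V[OF U, of f "\<lambda>i. g i + B i" "\<lambda>i. f i + A i" g] unfolding X1_def X2_def Rest_def \<alpha>_def by simp
    also have "(\<Sum>k<n. if e k \<in> U then g (e k) + B (e k) + (f (e k) + A (e k)) else f (e k) + g (e k)) - (\<Sum>k<n. pen \<alpha> (hU e U) k)
        = (\<Sum>k<n. f (e k) + g (e k)) + SX n \<alpha> (\<lambda>k. g (e k) + B (e k) + (f (e k) + A (e k)) - f (e k) - g (e k)) (hU e U)"
      by (rule formX)
    also have "(\<lambda>k. g (e k) + B (e k) + (f (e k) + A (e k)) - f (e k) - g (e k)) = (\<lambda>k. AA k + BB k)"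
      by (rule ext) (simp add: AAe BBe)
    finally show ?thesis unfolding K_def by simp
  qed
  have PhiY: "Y1 (C \<union> (M - U)) + Y2 (C \<union> U) = K + SY n \<alpha> AA BB (hU e U)" if U: "U \<subseteq> M" for U
  proof -
    have "Y1 (C \<union> (M - U)) + Y2 (C \<union> U) = ((\<Sum>i\<in>C. f i + (f i + A i)) + (\<Sum>i\<in>I - (C \<union> M). g i + (g i + B i)) + Rest)
       + ((\<Sum>k<n. if e k \<in> U then g (e k) + (f (e k) + A (e k)) else f (e k) + (g (e k) + B (e k))) - (\<Sum>k<n. pen \<alpha> (hU e U) k))"
      using V[OF U, of f g "\<lambda>i. f i + A i" "\<lambda>i. g i + B i"] unfolding Y1_def Y2_def Rest_def \<alpha>_def by simp
    also have "(\<Sum>k<n. if e k \<in> U then g (e k) + (f (e k) + A (e k)) else f (e k) + (g (e k) + B (e k))) - (\<Sum>k<n. pen \<alpha> (hU e U) k)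
        = SY n \<alpha> (\<lambda>k. g (e k) + (f (e k) + A (e k))) (\<lambda>k. f (e k) + (g (e k) + B (e k))) (hU e U)"
      by (rule formY)
    also have "\<dots> = SY n \<alpha> (\<lambda>k. AA k + (f (e k) + g (e k))) (\<lambda>k. BB k + (f (e k) + g (e k))) (hU e U)"
      by (simp add: AAe BBe algebra_simps)
    also have "\<dots> = (\<Sum>k<n. f (e k) + g (e k)) + SY n \<alpha> AA BB (hU e U)" by (rule SY_shift)
    also have "(\<Sum>i\<in>I - (C \<union> M). g i + (g i + B i)) = (\<Sum>i\<in>I - (C \<union> M). g i + B i + g i)"
      by (simp add: algebra_simps)
    finally show ?thesis unfolding K_def by simp
  qed
  have PhiZ: "Z1 (C \<union> (M - U)) + Z2 (C \<union> U) = K + SX n \<alpha> (\<lambda>k. AA k + BB k) (\<lambda>k. hU e U k + 2)" if U: "U \<subseteq> M" for U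
  proof -
    have "Z1 (C \<union> (M - U)) + Z2 (C \<union> U) = ((\<Sum>i\<in>C. f i + a i + (f i + A i - a i)) + (\<Sum>i\<in>I - (C \<union> M). g i + B i - a i + (g i + a i)) + Rest)
       + ((\<Sum>k<n. if e k \<in> U then g (e k) + B (e k) - a (e k) + (f (e k) + A (e k) - a (e k)) else f (e k) + a (e k) + (g (e k) + a (e k))) - (\<Sum>k<n. pen \<alpha> (hU e U) k))"
      using V[OF U, of "\<lambda>i. f i + a i" "\<lambda>i. g i + B i - a i" "\<lambda>i. f i + A i - a i" "\<lambda>i. g i + a i"] unfolding Z1_def Z2_def Rest_def \<alpha>_def by simp
    also have "(\<Sum>k<n. if e k \<in> U then g (e k) + B (e k) - a (e k) + (f (e k) + A (e k) - a (e k)) else f (e k) + a (e k) + (g (e k) + a (e k))) - (\<Sum>k<n. pen \<alpha> (hU e U) k)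
        = (\<Sum>k<n. f (e k) + a (e k) + (g (e k) + a (e k))) + SX n \<alpha> (\<lambda>k. g (e k) + B (e k) - a (e k) + (f (e k) + A (e k) - a (e k)) - (f (e k) + a (e k)) - (g (e k) + a (e k))) (hU e U)"
      by (rule formX)
    also have "(\<lambda>k. g (e k) + B (e k) - a (e k) + (f (e k) + A (e k) - a (e k)) - (f (e k) + a (e k)) - (g (e k) + a (e k))) = (\<lambda>k. (AA k + BB k) - 4 * \<alpha> k)"
      by (rule ext) (simp add: AAe BBe \<alpha>_def)
    also have "(\<Sum>k<n. f (e k) + a (e k) + (g (e k) + a (e k))) = (\<Sum>k<n. f (e k) + g (e k)) + (\<Sum>k<n. 2 * \<alpha> k)"
      by (simp add: \<alpha>_def sum.distrib[symmetric]) (rule sum.cong[OF refl], simp)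
    also have "(\<Sum>i\<in>C. f i + a i + (f i + A i - a i)) = (\<Sum>i\<in>C. f i + (f i + A i))" by simp
    also have "(\<Sum>i\<in>I - (C \<union> M). g i + B i - a i + (g i + a i)) = (\<Sum>i\<in>I - (C \<union> M). g i + B i + g i)" by simp
    finally show ?thesis unfolding K_def SX_shift2 by simp
  qed
  define h0 where "h0 = hU e U0"
  have v0: "valid n h0" and h00: "h0 0 = 0" unfolding h0_def by (rule hU_valid, rule hU_0)
  have XQ: "X1 P + X2 Q = K + SX n \<alpha> (\<lambda>k. AA k + BB k) h0" unfolding Peq Qeq h0_def by (rule PhiX[OF U0M])
  have YQ: "Y1 P + Y2 Q = K + SY n \<alpha> AA BB h0" unfolding Peq Qeq h0_def by (rule PhiY[OF U0M])
  have ZQ: "Z1 P + Z2 Q = K + SX n \<alpha> (\<lambda>k. AA k + BB k) (\<lambda>k. h0 k + 2)" unfolding Peq Qeq h0_def by (rule PhiZ[OF U0M])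
  have sub: "C \<union> (M - U) \<subseteq> I" "C \<union> U \<subseteq> I" if "U \<subseteq> M" for U using that CI MI by auto
  have A0: "\<And>k. 0 \<le> AA k" unfolding AA_def by simp
  have Am: "\<And>k. Suc k < n \<Longrightarrow> AA (Suc k) \<le> AA k"
  proof -
    fix k assume "Suc k < n"
    then have "\<alpha> (Suc k) \<le> \<alpha> k" by (rule am)
    then show "AA (Suc k) \<le> AA k" unfolding AA_def by (intro max.mono) auto
  qed
  have B0: "\<And>k. 0 \<le> BB k" unfolding BB_def by simp
  have Bm: "\<And>k. Suc k < n \<Longrightarrow> BB (Suc k) \<le> BB k"
  proof -
    fix k assume "Suc k < n"
    then have "\<alpha> (Suc k) \<le> \<alpha> k" by (rule am)
    then show "BB (Suc k) \<le> BB k" unfolding BB_def by (intro max.mono) auto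
  qed
  have W: "\<exists>U. U \<subseteq> M \<and> (\<forall>k\<le>n. hU e U k = h k)" if "valid n h" "h 0 = 0" for h
    using hU_walk[OF e' that] walk_sub[OF e'] by blast
  have claimA: "\<exists>P' Q'. P' \<subseteq> I \<and> Q' \<subseteq> I \<and> Y1 P + Y2 Q \<le> X1 P' + X2 Q'"
  proof -
    have "SY n \<alpha> AA BB h0 \<le> SX n \<alpha> (\<lambda>k. AA k + BB k) (\<lambda>k. \<bar>h0 k\<bar>)"
      by (rule walk_i[where AA=AA and BB=BB and \<alpha>=\<alpha> and n=n and h=h0, OF v0 h00 A0 Am B0 Bm])
    moreover obtain U where U: "U \<subseteq> M" "\<forall>k\<le>n. hU e U k = \<bar>h0 k\<bar>"
      using W[OF valid_abs[OF v0]] h00 by auto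
    ultimately have "Y1 P + Y2 Q \<le> X1 (C \<union> (M - U)) + X2 (C \<union> U)"
      using YQ PhiX[OF U(1)] SX_agree[of n "hU e U" "\<lambda>k. \<bar>h0 k\<bar>"] U(2) by simp
    then show ?thesis using sub[OF U(1)] by blast
  qed
  have claimB: "\<exists>P' Q'. P' \<subseteq> I \<and> Q' \<subseteq> I \<and> Z1 P + Z2 Q - \<delta> - \<epsilon> \<le> X1 P' + X2 Q'"
  proof -
    have "SX n \<alpha> (\<lambda>k. AA k + BB k) (\<lambda>k. h0 k + 2) - \<delta> - \<epsilon> \<le> SX n \<alpha> (\<lambda>k. AA k + BB k) (\<lambda>k. 1 - \<bar>h0 k + 1\<bar>)"
      using walk_ii[where \<alpha>=\<alpha> and n=n and h=h0 and cc="\<lambda>k. AA k + BB k", OF v0 h00 al0 am d ep] AAd BBd by simp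
    moreover obtain U where U: "U \<subseteq> M" "\<forall>k\<le>n. hU e U k = 1 - \<bar>h0 k + 1\<bar>"
      using W[OF valid_refl1[OF v0]] h00 by auto
    ultimately have "Z1 P + Z2 Q - \<delta> - \<epsilon> \<le> X1 (C \<union> (M - U)) + X2 (C \<union> U)"
      using ZQ PhiX[OF U(1)] SX_agree[of n "hU e U" "\<lambda>k. 1 - \<bar>h0 k + 1\<bar>"] U(2) by simp
    then show ?thesis using sub[OF U(1)] by blast
  qed
  have claimC: "\<exists>P' Q'. P' \<subseteq> I \<and> Q' \<subseteq> I \<and> (X1 P + X2 Q \<le> Y1 P' + Y2 Q' \<or> X1 P + X2 Q \<le> Z1 P' + Z2 Q' - \<delta> - \<epsilon>)"
  proof -
    have W3: "(\<exists>h'. valid n h' \<and> h' 0 = 0 \<and> SX n \<alpha> (\<lambda>k. AA k + BB k) h0 \<le> SY n \<alpha> AA BB h')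
       \<or> (\<exists>h'. valid n h' \<and> h' 0 = 0 \<and> SX n \<alpha> (\<lambda>k. AA k + BB k) h0 \<le> SX n \<alpha> (\<lambda>k. AA k + BB k) (\<lambda>k. h' k + 2) - \<delta> - \<epsilon>)"
      by (rule walk_iii[where \<alpha>=\<alpha> and n=n and h=h0 and AA=AA and BB=BB]) (use v0 h00 al0 am d ep AAd BBd in auto)
    from W3 show ?thesis
    proof (elim disjE exE conjE)
      fix h' assume v': "valid n h'" and h'0: "h' 0 = 0" and le: "SX n \<alpha> (\<lambda>k. AA k + BB k) h0 \<le> SY n \<alpha> AA BB h'"
      obtain U where U: "U \<subseteq> M" "\<forall>k\<le>n. hU e U k = h' k" using W[OF v' h'0] by auto
      have "X1 P + X2 Q \<le> Y1 (C \<union> (M - U)) + Y2 (C \<union> U)"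
        using XQ PhiY[OF U(1)] SY_agree[of n "hU e U" h'] U(2) le by simp
      then show ?thesis using sub[OF U(1)] by blast
    next
      fix h' assume v': "valid n h'" and h'0: "h' 0 = 0" and le: "SX n \<alpha> (\<lambda>k. AA k + BB k) h0 \<le> SX n \<alpha> (\<lambda>k. AA k + BB k) (\<lambda>k. h' k + 2) - \<delta> - \<epsilon>"
      obtain U where U: "U \<subseteq> M" "\<forall>k\<le>n. hU e U k = h' k" using W[OF v' h'0] by auto
      have "X1 P + X2 Q \<le> Z1 (C \<union> (M - U)) + Z2 (C \<union> U) - \<delta> - \<epsilon>"
        using XQ PhiZ[OF U(1)] SX_agree[of n "\<lambda>k. hU e U k + 2" "\<lambda>k. h' k + 2"] U(2) le by simp
      then show ?thesis using sub[OF U(1)] by blast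
    qed
  qed
  show ?thesis using claimA claimB claimC by blast
qed

lemma Max_attained: "finite S \<Longrightarrow> S \<noteq> {} \<Longrightarrow> \<exists>P\<in>S. F P = Max (F ` S)"
  by (metis (mono_tags, lifting) Max_in finite_imageI image_iff image_is_empty)

lemma main_abs:
  fixes a f g :: "nat \<Rightarrow> real" and \<delta> \<epsilon> :: real and N :: nat
  defines "I \<equiv> {1..N}" and "A \<equiv> \<lambda>i. max 0 (a i - \<delta>)" and "B \<equiv> \<lambda>i. max 0 (a i - \<epsilon>)"
  defines "X1 \<equiv> EEg I a f (\<lambda>i. g i + B i)" and "X2 \<equiv> EEg I a (\<lambda>i. f i + A i) g"
      and "Y1 \<equiv> EEg I a f g" and "Y2 \<equiv> EEg I a (\<lambda>i. f i + A i) (\<lambda>i. g i + B i)"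
      and "Z1 \<equiv> EEg I a (\<lambda>i. f i + a i) (\<lambda>i. g i + B i - a i)" and "Z2 \<equiv> EEg I a (\<lambda>i. f i + A i - a i) (\<lambda>i. g i + a i)"
  assumes a0: "\<And>i. 0 \<le> a i" and d: "\<delta> > 0" and ep: "\<epsilon> > 0"
  shows "Max (X1 ` Pow I) + Max (X2 ` Pow I) = max (Max (Y1 ` Pow I) + Max (Y2 ` Pow I)) (Max (Z1 ` Pow I) + Max (Z2 ` Pow I) - \<delta> - \<epsilon>)"
proof -
  have fin: "finite (Pow I)" and ne: "Pow I \<noteq> {}" unfolding I_def by auto
  have X1e: "X1 = EEg {1..N} a f (\<lambda>i. g i + max 0 (a i - \<epsilon>))" unfolding X1_def B_def I_def by simp
  have X2e: "X2 = EEg {1..N} a (\<lambda>i. f i + max 0 (a i - \<delta>)) g" unfolding X2_def A_def I_def by simp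
  have Y1e: "Y1 = EEg {1..N} a f g" unfolding Y1_def I_def by simp
  have Y2e: "Y2 = EEg {1..N} a (\<lambda>i. f i + max 0 (a i - \<delta>)) (\<lambda>i. g i + max 0 (a i - \<epsilon>))" unfolding Y2_def A_def B_def I_def by simp
  have Z1e: "Z1 = EEg {1..N} a (\<lambda>i. f i + a i) (\<lambda>i. g i + max 0 (a i - \<epsilon>) - a i)" unfolding Z1_def B_def I_def by simp
  have Z2e: "Z2 = EEg {1..N} a (\<lambda>i. f i + max 0 (a i - \<delta>) - a i) (\<lambda>i. g i + a i)" unfolding Z2_def A_def I_def by simp
  note PC0 = pair_claims[where a=a and f=f and g=g and \<delta>=\<delta> and \<epsilon>=\<epsilon> and N=N, OF a0 d ep]
  note PC = PC0[folded X1e X2e Y1e Y2e Z1e Z2e, folded I_def]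
  have ge: "\<And>F P. P \<subseteq> I \<Longrightarrow> F P \<le> Max (F ` Pow I)" using fin by (intro Max_ge) auto
  obtain PX1 where PX1: "PX1 \<in> Pow I" "X1 PX1 = Max (X1 ` Pow I)" using Max_attained[OF fin ne] by blast
  obtain PX2 where PX2: "PX2 \<in> Pow I" "X2 PX2 = Max (X2 ` Pow I)" using Max_attained[OF fin ne] by blast
  obtain PY1 where PY1: "PY1 \<in> Pow I" "Y1 PY1 = Max (Y1 ` Pow I)" using Max_attained[OF fin ne] by blast
  obtain PY2 where PY2: "PY2 \<in> Pow I" "Y2 PY2 = Max (Y2 ` Pow I)" using Max_attained[OF fin ne] by blast
  obtain PZ1 where PZ1: "PZ1 \<in> Pow I" "Z1 PZ1 = Max (Z1 ` Pow I)" using Max_attained[OF fin ne] by blast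
  obtain PZ2 where PZ2: "PZ2 \<in> Pow I" "Z2 PZ2 = Max (Z2 ` Pow I)" using Max_attained[OF fin ne] by blast
  have "Max (Y1 ` Pow I) + Max (Y2 ` Pow I) \<le> Max (X1 ` Pow I) + Max (X2 ` Pow I)"
  proof -
    obtain P' Q' where "P' \<subseteq> I" "Q' \<subseteq> I" "Y1 PY1 + Y2 PY2 \<le> X1 P' + X2 Q'"
      using PC[of PY1 PY2] PY1 PY2 by auto
    then show ?thesis using PY1 PY2 ge[of P' X1] ge[of Q' X2] by linarith
  qed
  moreover have "Max (Z1 ` Pow I) + Max (Z2 ` Pow I) - \<delta> - \<epsilon> \<le> Max (X1 ` Pow I) + Max (X2 ` Pow I)"
  proof -
    obtain P' Q' where "P' \<subseteq> I" "Q' \<subseteq> I" "Z1 PZ1 + Z2 PZ2 - \<delta> - \<epsilon> \<le> X1 P' + X2 Q'"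
      using PC[of PZ1 PZ2] PZ1 PZ2 by auto
    then show ?thesis using PZ1 PZ2 ge[of P' X1] ge[of Q' X2] by linarith
  qed
  moreover have "Max (X1 ` Pow I) + Max (X2 ` Pow I) \<le> max (Max (Y1 ` Pow I) + Max (Y2 ` Pow I)) (Max (Z1 ` Pow I) + Max (Z2 ` Pow I) - \<delta> - \<epsilon>)"
  proof -
    obtain P' Q' where PQ: "P' \<subseteq> I" "Q' \<subseteq> I" "X1 PX1 + X2 PX2 \<le> Y1 P' + Y2 Q' \<or> X1 PX1 + X2 PX2 \<le> Z1 P' + Z2 Q' - \<delta> - \<epsilon>"
      using PC[of PX1 PX2] PX1 PX2 by auto
    then show ?thesis using PX1 PX2 ge[of P' Y1] ge[of Q' Y2] ge[of P' Z1] ge[of Q' Z2] by linarith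
  qed
  ultimately show ?thesis by linarith
qed

lemma phi_split:
  fixes \<delta> \<epsilon> r c c' :: real and l m n :: int and j :: nat
  assumes d: "\<delta> > 0" and ep: "\<epsilon> > 0"
  shows "phi \<delta> \<epsilon> r c c' l m (n + int j - 1)
    = max (max 0 (\<bar>r\<bar> - \<delta>) * of_int l + \<bar>r\<bar> * of_int n + (if 0 \<le> r then c else c') + \<bar>r\<bar> * (real j - 1))
          (- max 0 (\<bar>r\<bar> - \<epsilon>) * of_int m - \<bar>r\<bar> * of_int n + (if 0 \<le> r then c' else c) - \<bar>r\<bar> * (real j - 1))"
proof (cases "0 \<le> r")
  case True
  have z: "max 0 (- r - \<epsilon>) = 0" "max 0 (- r - \<delta>) = 0" using True d ep by auto
  show ?thesis unfolding phi_def eta_def eta'_def using True z by (simp add: algebra_simps)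
next
  case False
  have z: "max 0 (r - \<epsilon>) = 0" "max 0 (r - \<delta>) = 0" using False d ep by auto
  show ?thesis unfolding phi_def eta_def eta'_def using False z by (simp add: algebra_simps max.commute)
qed

definition hbf :: "real \<Rightarrow> (nat \<Rightarrow> real) \<Rightarrow> (nat \<Rightarrow> real) \<Rightarrow> (nat \<Rightarrow> real) \<Rightarrow> int \<Rightarrow> int \<Rightarrow> int \<Rightarrow> nat \<Rightarrow> real" where
  "hbf \<delta> r c c' l m n i = max 0 (\<bar>r i\<bar> - \<delta>) * of_int l + \<bar>r i\<bar> * of_int n + (if 0 \<le> r i then c i else c' i)"

definition lbf :: "real \<Rightarrow> (nat \<Rightarrow> real) \<Rightarrow> (nat \<Rightarrow> real) \<Rightarrow> (nat \<Rightarrow> real) \<Rightarrow> int \<Rightarrow> int \<Rightarrow> int \<Rightarrow> nat \<Rightarrow> real" where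
  "lbf \<epsilon> r c c' l m n i = - max 0 (\<bar>r i\<bar> - \<epsilon>) * of_int m - \<bar>r i\<bar> * of_int n + (if 0 \<le> r i then c' i else c i)"

lemma tau_EEg:
  assumes d: "\<delta> > 0" and ep: "\<epsilon> > 0"
  shows "tau N \<delta> \<epsilon> r c c' l m n = Max (EEg {1..N} (\<lambda>i. \<bar>r i\<bar>) (hbf \<delta> r c c' l m n) (lbf \<epsilon> r c c' l m n) ` Pow {1..N})"
proof -
  have "(\<lambda>i j. phi \<delta> \<epsilon> (r i) (c i) (c' i) l m (n + int j - 1))
      = (\<lambda>i j. max (hbf \<delta> r c c' l m n i + \<bar>r i\<bar> * (real j - 1)) (lbf \<epsilon> r c c' l m n i - \<bar>r i\<bar> * (real j - 1)))"
    by (intro ext) (simp add: phi_split[OF d ep] hbf_def lbf_def)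
  then show ?thesis unfolding tau_def using up_eq by simp
qed

theorem theorem3:
  fixes N :: nat and \<delta> \<epsilon> :: real and r c c' :: "nat \<Rightarrow> real" and l m n :: int
  assumes "N \<ge> 1" and "\<delta> > 0" and "\<epsilon> > 0"
  shows "tau N \<delta> \<epsilon> r c c' l (m - 1) n + tau N \<delta> \<epsilon> r c c' (l + 1) m n =
         max (tau N \<delta> \<epsilon> r c c' l m n + tau N \<delta> \<epsilon> r c c' (l + 1) (m - 1) n)
             (tau N \<delta> \<epsilon> r c c' l (m - 1) (n + 1) + tau N \<delta> \<epsilon> r c c' (l + 1) m (n - 1) - \<delta> - \<epsilon>)"
proof -
  note d = \<open>\<delta> > 0\<close> and ep = \<open>\<epsilon> > 0\<close>
  let ?a = "\<lambda>i. \<bar>r i\<bar>"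
  let ?f = "hbf \<delta> r c c' l m n" and ?g = "lbf \<epsilon> r c c' l m n"
  have e1: "hbf \<delta> r c c' l (m - 1) n = ?f" "lbf \<epsilon> r c c' l (m - 1) n = (\<lambda>i. ?g i + max 0 (?a i - \<epsilon>))"
    by (auto simp: hbf_def lbf_def algebra_simps)
  have e2: "hbf \<delta> r c c' (l + 1) m n = (\<lambda>i. ?f i + max 0 (?a i - \<delta>))" "lbf \<epsilon> r c c' (l + 1) m n = ?g"
    by (auto simp: hbf_def lbf_def algebra_simps)
  have e3: "hbf \<delta> r c c' (l + 1) (m - 1) n = (\<lambda>i. ?f i + max 0 (?a i - \<delta>))" "lbf \<epsilon> r c c' (l + 1) (m - 1) n = (\<lambda>i. ?g i + max 0 (?a i - \<epsilon>))"
    by (auto simp: hbf_def lbf_def algebra_simps)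
  have e4: "hbf \<delta> r c c' l (m - 1) (n + 1) = (\<lambda>i. ?f i + ?a i)" "lbf \<epsilon> r c c' l (m - 1) (n + 1) = (\<lambda>i. ?g i + max 0 (?a i - \<epsilon>) - ?a i)"
    by (auto simp: hbf_def lbf_def algebra_simps)
  have e5: "hbf \<delta> r c c' (l + 1) m (n - 1) = (\<lambda>i. ?f i + max 0 (?a i - \<delta>) - ?a i)" "lbf \<epsilon> r c c' (l + 1) m (n - 1) = (\<lambda>i. ?g i + ?a i)"
    by (auto simp: hbf_def lbf_def algebra_simps)
  show ?thesis
    unfolding tau_EEg[OF d ep] e1 e2 e3 e4 e5
    by (rule main_abs[where a="?a" and f="?f" and g="?g" and \<delta>=\<delta> and \<epsilon>=\<epsilon> and N=N, OF _ d ep]) simp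
qed


end
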